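(* Let $d\in\mathbb{N}$. For each $s\in\mathbb{N}$, let $\chi_d(s)$ be the number of points $(m,n)\in\mathbb{Z}^2$ for which the conditions $$(m,n)=\sum_{k=1}^s\big(f(-i_k),\,f(-i_k-1)\big)\quad\text{and}\quad \sum_{k=1}^s f(i_k)\le d$$ admit a solution in integers $0\le i_1\le\dots\le i_s$, and $s$ is maximal with this property (i.e. no solution exists with a larger number of terms). Then $$\chi_d(s)=\begin{cases}2s+1 & \text{if } 0\le s<d,\\ d+1 & \text{if } s=d,\\ 0 & \text{if } s>d.\end{cases}$$ Equivalently: for every $s\in\mathbb{N}$, the set $E_d(s)=\{\alpha\in E_d:\ s_d(\alpha)=s\}$ is empty for $s>d$, has $2s+1$ elements for $0\le s<d$, and has $d+1$ elements for $s=d$.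
   Context: $\mathbb{N}=\{0,1,2,\dots\}$. Let $f\colon\mathbb{Z}\to\mathbb{Z}$ be defined by $f(0)=f(1)=1$ and $f(i+2)=f(i+1)+f(i)$ for all $i\in\mathbb{Z}$ (so $(f(i))_{i\ge0}$ is the Fibonacci sequence, and e.g. $f(-1)=0$, $f(-2)=1$). An empty sum is $0$ (so $(m,n)=(0,0)$ satisfies the conditions with $s=0$). Let $\gamma=(1+\sqrt5)/2$ and $\mathbb{Z}[\gamma]=\mathbb{Z}\oplus\mathbb{Z}\gamma^{-1}$; one has $\gamma^{-i}=f(-i)+f(-i-1)\gamma^{-1}$ for $i\in\mathbb{Z}$. For $d\in\mathbb{N}$, $E_d$ denotes the set of $\alpha\in\mathbb{Z}[\gamma]$ such that $\alpha=\gamma^{-i_1}+\dots+\gamma^{-i_s}$ and $f(i_1)+\dots+f(i_s)\le d$ for some $s\in\mathbb{N}$ and integers $0\le i_1\le\dots\le i_s$; for $\alpha\in E_d$, $s_d(\alpha)$ is the largest such $s$. *)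

theory Defs
  imports Main
begin

fun fpos :: "nat \<Rightarrow> int" where
  "fpos 0 = 1"
| "fpos (Suc 0) = 1"
| "fpos (Suc (Suc n)) = fpos (Suc n) + fpos n"

text \<open>Negative direction: fneg n = f(-n); f(0)=1, f(-1)=0, f(i) = f(i+2) - f(i+1).\<close>
fun fneg :: "nat \<Rightarrow> int" where
  "fneg 0 = 1"
| "fneg (Suc 0) = 0"
| "fneg (Suc (Suc n)) = fneg n - fneg (Suc n)"

definition fib_ext :: "int \<Rightarrow> int" where
  "fib_ext i = (if 0 \<le> i then fpos (nat i) else fneg (nat (- i)))"

lemma fneg_rec: "fneg (Suc (Suc n)) = fneg n - fneg (Suc n)" by simp

lemma fib_ext_rec: "fib_ext (i + 2) = fib_ext (i + 1) + fib_ext i"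
proof (cases "0 \<le> i")
  case True
  then have "nat (i + 2) = Suc (Suc (nat i))" "nat (i + 1) = Suc (nat i)" by auto
  then show ?thesis using True by (simp add: fib_ext_def)
next
  case False
  show ?thesis
  proof (cases "i = -1")
    case True then show ?thesis by (simp add: fib_ext_def)
  next
    case F2: False
    define n where "n = nat (- i - 2)"
    have e: "nat (- i) = Suc (Suc n)" "nat (- (i + 1)) = Suc n" "nat (- (i + 2)) = n"
      using False F2 by (auto simp: n_def)
    have "\<not> 0 \<le> i + 1" using False F2 by auto
    moreover have "(0 \<le> i + 2) = (n = 0)" using False F2 by (auto simp: n_def)
    ultimately show ?thesis using False e
      by (cases n) (auto simp: fib_ext_def)
  qed
qed

lemma "fib_ext 0 = 1" "fib_ext 1 = 1" "fib_ext (-1) = 0" "fib_ext (-2) = 1"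
  by (simp_all add: fib_ext_def numeral_2_eq_2)

definition admits :: "nat \<Rightarrow> int \<times> int \<Rightarrow> nat \<Rightarrow> bool" where
  "admits d p s \<longleftrightarrow> (\<exists>is :: int list. length is = s \<and> sorted is \<and> (\<forall>i\<in>set is. 0 \<le> i) \<and>
      p = ((\<Sum>i\<leftarrow>is. fib_ext (- i)), (\<Sum>i\<leftarrow>is. fib_ext (- i - 1))) \<and>
      (\<Sum>i\<leftarrow>is. fib_ext i) \<le> int d)"

definition Eds :: "nat \<Rightarrow> nat \<Rightarrow> (int \<times> int) set" where
  "Eds d s = {p. admits d p s \<and> (\<forall>t. s < t \<longrightarrow> \<not> admits d p t)}"

definition chi :: "nat \<Rightarrow> nat \<Rightarrow> nat" where
  "chi d s = card (Eds d s)"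

end

theory Submission
  imports Defs Complex_Main
begin


lemma fpos_pos: "fpos n \<ge> 1"
  by (induction n rule: fpos.induct) auto

lemma fpos_SS: "fpos (Suc (Suc n)) = fpos (Suc n) + fpos n" by simp

lemma fpos_mono_Suc: "fpos n \<le> fpos (Suc n)"
  using fpos_pos[of "n - 1"] by (cases n) auto

lemma fpos_mono: "m \<le> n \<Longrightarrow> fpos m \<le> fpos n"
  by (induction n rule: dec_induct) (auto intro: order_trans fpos_mono_Suc)

lemma fpos_ge: "fpos n \<ge> int n"
proof (induction n rule: fpos.induct)
  case (3 n) then show ?case using fpos_pos[of n] by simp
qed auto

definition lrec :: "(nat \<Rightarrow> 'a::comm_ring_1) \<Rightarrow> bool" where
  "lrec g \<longleftrightarrow> (\<forall>n. g n = g (Suc n) + g (Suc (Suc n)))"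

lemma lrecD: "lrec g \<Longrightarrow> g n = g (Suc n) + g (Suc (Suc n))"
  unfolding lrec_def by blast

lemma lrec_fneg: "lrec fneg" unfolding lrec_def by simp
lemma lrec_fneg1: "lrec (\<lambda>n. fneg (Suc n))" unfolding lrec_def by simp

definition S :: "(nat \<Rightarrow> 'a::comm_ring_1) \<Rightarrow> nat list \<Rightarrow> 'a" where
  "S g xs = sum_list (map g xs)"

lemma S_simps[simp]: "S g [] = 0" "S g (x # xs) = g x + S g xs" "S g (xs @ ys) = S g xs + S g ys"
  by (simp_all add: S_def)

lemma S_remove1: "x \<in> set xs \<Longrightarrow> S g xs = g x + S g (remove1 x xs)"
  by (induction xs) (auto simp: algebra_simps)

lemma S_replicate[simp]: "S g (replicate n x) = of_nat n * g x"
  by (induction n) (auto simp: algebra_simps)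

lemma S_map_tele:
  assumes "lrec g"
  shows "S g (map (\<lambda>t. i + 2*t + 1) [0..<q]) = g i - g (i + 2*q)"
proof (induction q)
  case (Suc q)
  have "g (i + 2*q) = g (i + 2*q + 1) + g (i + 2 * Suc q)"
    using lrecD[OF assms, of "i + 2*q"] by simp
  then show ?case using Suc by simp
qed simp

lemma W_map_tele:
  "S fpos (map (\<lambda>t. i + 2*t + 1) [0..<q]) = fpos (i + 2*q) - fpos i"
proof (induction q)
  case (Suc q)
  have "fpos (i + 2 * Suc q) = fpos (i + 2*q + 1) + fpos (i + 2*q)"
    using fpos_SS[of "i + 2*q"] by simp
  then show ?case using Suc by simp
qed simp

definition nodd :: "nat \<Rightarrow> nat \<Rightarrow> nat list" where
  "nodd i q = map (\<lambda>t. i + 2*t + 1) [0..<q] @ [i + 2*q - 1]"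

definition neven :: "nat \<Rightarrow> nat \<Rightarrow> nat list" where
  "neven i q = [i+2, i+2] @ map (\<lambda>t. (i+3) + 2*t + 1) [0..<q-1] @ [i + 2*q]"

definition NN :: "nat \<Rightarrow> nat \<Rightarrow> nat list" where
  "NN i r = (if r = 4 then [i+2,i+2,i+2] else if odd r then nodd i (r div 2) else neven i (r div 2 - 1))"

lemma lrec_shift: "lrec g \<Longrightarrow> g (n + 2) = g n - g (n+1)"
  using lrecD[of g n] by simp

lemma NN_S:
  assumes "lrec g" "3 \<le> r"
  shows "S g (NN i r) = g i + g (i + r)"
proof -
  have L: "\<And>n. g n = g (n+1) + g (n+2)" using lrecD[OF assms(1)] by (metis Suc_eq_plus1 add_2_eq_Suc')
  consider "r = 4" | "odd r" | "even r" "r \<noteq> 4" by blast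
  then show ?thesis
  proof cases
    case 1
    have "g i = g (i+1) + g (i+2)" "g (i+1) = g (i+2) + g (i+3)" "g (i+2) = g (i+3) + g(i+4)"
      using L[of i] L[of "i+1"] L[of "i+2"] by (simp_all add: eval_nat_numeral)
    then show ?thesis using 1 by (simp add: NN_def algebra_simps eval_nat_numeral)
  next
    case 2
    then obtain q where q0: "r = 2*q+1" by (blast elim: oddE)
    then have q: "r = 2*q+1" "1 \<le> q" using assms(2) by auto
    have rd: "r div 2 = q" using q by simp
    have e: "g (i + 2*q - 1) = g (i + 2*q) + g (i + 2*q + 1)"
      using L[of "i + 2*q - 1"] q(2) by (simp add: Suc_diff_le)
    have r4: "r \<noteq> 4" using 2 by auto
    show ?thesis using 2 q rd e r4 S_map_tele[OF assms(1), of i q]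
      by (simp add: NN_def nodd_def)
  next
    case 3
    then obtain q0 where "r = 2*q0" by (blast elim: evenE)
    then obtain q where q: "r = 2*q+2" "2 \<le> q" using assms(2) 3(2) by (cases q0) auto
    have rd: "r div 2 - 1 = q" using q by simp
    have e1: "g i = g (i+2) + g (i+2) + g (i+3)"
      using L[of i] L[of "i+1"] by (simp add: eval_nat_numeral)
    have e2: "g (i + 2*q) = g (i + 2*q + 1) + g (i + 2*q + 2)" using L[of "i+2*q"] by simp
    have e3: "i + 3 + 2 * (q - 1) = i + 2*q + 1" using q by simp
    have "S g (NN i r) = S g (neven i q)" using 3 rd by (simp add: NN_def)
    also have "\<dots> = (g (i+2) + g (i+2)) + (g (i+3) - g (i + 3 + 2 * (q - 1))) + g (i + 2*q)"
      unfolding neven_def S_simps(3) S_map_tele[OF assms(1), of "i+3" "q-1"] by (simp add: add.assoc)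
    also have "\<dots> = g i + g (i + r)" 
    proof -
      have A: "g (i + 3 + 2 * (q - 1)) = g (i + 2*q + 1)" using e3 by (rule arg_cong)
      have C: "g (i + r) = g (i + 2*q + 2)" using q(1) by (simp add: add.assoc)
      show ?thesis unfolding A C e1 e2 by (simp add: algebra_simps)
    qed
    finally show ?thesis .
  qed
qed

lemma fpos_add2: "fpos (n + 2) = fpos (n+1) + fpos n"
  by (simp add: eval_nat_numeral)

lemma NN_W:
  assumes "3 \<le> r"
  shows "(S fpos (NN i r) < fpos i + fpos (i + r) \<and> 2 \<le> length (NN i r)) \<or>
         (S fpos (NN i r) = fpos i + fpos (i + r) \<and> 3 \<le> length (NN i r))"
proof -
  consider "r = 4" | "odd r" | "even r" "r \<noteq> 4" by blast
  then show ?thesis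
  proof cases
    case 1
    show ?thesis using 1 by (simp add: NN_def eval_nat_numeral)
  next
    case 2
    then obtain q where q0: "r = 2*q+1" by (blast elim: oddE)
    then have q: "r = 2*q+1" "1 \<le> q" using assms by auto
    have rd: "r div 2 = q" using q by simp
    have r4: "r \<noteq> 4" using 2 by auto
    have e: "fpos (i + 2*q + 1) = fpos (i + 2*q) + fpos (i + 2*q - 1)"
      using fpos_add2[of "i + 2*q - 1"] q(2) by (simp add: add.assoc)
    have "S fpos (NN i r) = (fpos (i + 2*q) - fpos i) + fpos (i + 2*q - 1)"
      using r4 rd 2 W_map_tele[of i q] by (simp add: NN_def nodd_def)
    moreover have "length (NN i r) = q + 1" using r4 rd 2 by (simp add: NN_def nodd_def)
    ultimately show ?thesis using e q fpos_pos[of i] by (simp add: add.assoc)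
  next
    case 3
    then obtain q0 where "r = 2*q0" by (blast elim: evenE)
    then obtain q where q: "r = 2*q+2" "2 \<le> q" using assms 3(2) by (cases q0) auto
    have rd: "r div 2 - 1 = q" using q by simp
    have e2: "fpos (i + 2*q + 2) = fpos (i + 2*q + 1) + fpos (i + 2*q)" using fpos_add2[of "i+2*q"] by simp
    have e3: "fpos (i + 3 + 2 * (q - 1)) = fpos (i + 2*q + 1)" using q by (simp add: algebra_simps)
    have "S fpos (NN i r) = S fpos (neven i q)" using 3 rd by (simp add: NN_def)
    also have "\<dots> = (fpos (i+2) + fpos (i+2)) + (fpos (i + 3 + 2 * (q - 1)) - fpos (i+3)) + fpos (i + 2*q)"
      unfolding neven_def S_simps(3) W_map_tele[of "i+3" "q-1"] by (simp add: add.assoc)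
    finally have W: "S fpos (NN i r) = (fpos (i+2) + fpos (i+2)) + (fpos (i + 2*q + 1) - fpos (i+3)) + fpos (i + 2*q)"
      using e3 by simp
    have C: "fpos (i + r) = fpos (i + 2*q + 2)" using q(1) by (simp add: add.assoc)
    have len: "length (NN i r) = q + 2" using 3 rd q by (simp add: NN_def neven_def)
    show ?thesis using W C len e2 q by (simp add: eval_nat_numeral)
  qed
qed



definition P :: "nat list \<Rightarrow> int \<times> int" where
  "P xs = (S fneg xs, S (\<lambda>n. fneg (Suc n)) xs)"

definition tup :: "nat \<Rightarrow> nat \<Rightarrow> nat \<Rightarrow> nat \<Rightarrow> nat list" where
  "tup k a b c = replicate a k @ replicate b (Suc k) @ replicate c (Suc (Suc k))"

lemma S_tup: "S g (tup k a b c) = of_nat a * g k + of_nat b * g (Suc k) + of_nat c * g (Suc (Suc k))"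
  by (simp add: tup_def add.assoc)

lemma length_tup[simp]: "length (tup k a b c) = a + b + c"
  by (simp add: tup_def)

lemma S_span:
  assumes "set xs \<subseteq> {k, Suc k, Suc (Suc k)}"
  shows "S g xs = S g (tup k (count_list xs k) (count_list xs (Suc k)) (count_list xs (Suc (Suc k))))"
    and "length xs = count_list xs k + count_list xs (Suc k) + count_list xs (Suc (Suc k))"
  using assms by (induction xs) (auto simp: S_tup algebra_simps)

lemma W_ge_len: "S fpos xs \<ge> int (length xs)"
  by (induction xs) (auto simp: add_mono fpos_pos[THEN order.trans[rotated]] intro: add_mono fpos_pos)

lemma normal_form:
  "xs \<noteq> [] \<Longrightarrow> \<exists>k a b c. 1 \<le> a \<and> P (tup k a b c) = P xs \<and> length xs \<le> a+b+c \<and>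
      S fpos (tup k a b c) \<le> S fpos xs"
proof (induction "nat (S fpos xs * S fpos xs + (S fpos xs - int (length xs)))" arbitrary: xs rule: less_induct)
  case less
  define i where "i = Min (set xs)"
  define j where "j = Max (set xs)"
  have fin: "finite (set xs)" "set xs \<noteq> {}" using less.prems by auto
  have ij: "i \<in> set xs" "j \<in> set xs" "\<And>x. x \<in> set xs \<Longrightarrow> i \<le> x \<and> x \<le> j"
    using fin by (auto simp: i_def j_def)
  show ?case
  proof (cases "j \<le> i + 2")
    case True
    have sub: "set xs \<subseteq> {i, Suc i, Suc (Suc i)}"
    proof
      fix x assume "x \<in> set xs"
      with ij(3)[of x] True show "x \<in> {i, Suc i, Suc (Suc i)}" by auto
    qed
    have a1: "1 \<le> count_list xs i" using ij(1)
      by (metis count_list_0_iff less_one not_less)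
    show ?thesis
      apply (rule exI[of _ i], rule exI[of _ "count_list xs i"], rule exI[of _ "count_list xs (Suc i)"],
          rule exI[of _ "count_list xs (Suc (Suc i))"])
      using a1 S_span(1)[OF sub, of fneg] S_span(1)[OF sub, of "\<lambda>n. fneg (Suc n)"]
        S_span(1)[OF sub, of fpos] S_span(2)[OF sub] by (simp add: P_def)
  next
    case False
    define r where "r = j - i"
    have r3: "3 \<le> r" and jr: "j = i + r" using False by (auto simp: r_def)
    define rest where "rest = remove1 i (remove1 j xs)"
    define ys where "ys = NN i r @ rest"
    have ine: "i \<noteq> j" using r3 jr by auto
    have iin: "i \<in> set (remove1 j xs)" using ij(1) ine by auto
    have Sx: "S g xs = g i + g j + S g rest" for g :: "nat \<Rightarrow> int"
    proof -
      have "S g xs = g j + S g (remove1 j xs)" by (rule S_remove1[OF ij(2)])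
      moreover have "S g (remove1 j xs) = g i + S g rest" unfolding rest_def by (rule S_remove1[OF iin])
      ultimately show ?thesis by (simp add: algebra_simps)
    qed
    have l1: "length (remove1 j xs) = length xs - 1" using ij(2) by (simp add: length_remove1)
    have l2: "length rest = length (remove1 j xs) - 1" using iin by (simp add: rest_def length_remove1)
    have l3: "length (remove1 j xs) \<ge> 1" using iin by (cases "remove1 j xs") auto
    have lx: "length xs = length rest + 2" using l1 l2 l3 by linarith
    have Sy: "\<And>g::nat\<Rightarrow>int. lrec g \<Longrightarrow> S g ys = S g xs"
      using Sx NN_S[OF _ r3] jr by (simp add: ys_def)
    have Py: "P ys = P xs" using Sy[OF lrec_fneg] Sy[OF lrec_fneg1] by (simp add: P_def)
    have Wy: "S fpos ys = S fpos (NN i r) + S fpos rest" by (simp add: ys_def)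
    have ly: "length ys = length (NN i r) + length rest" by (simp add: ys_def)
    have Wx: "S fpos xs = fpos i + fpos (i + r) + S fpos rest" using Sx jr by simp
    have cases: "(S fpos ys < S fpos xs \<and> length xs \<le> length ys) \<or>
                 (S fpos ys = S fpos xs \<and> length xs < length ys)"
      using NN_W[OF r3, of i] Wy ly Wx lx by auto
    have yne: "ys \<noteq> []" using cases lx by auto
    have wy0: "int (length ys) \<le> S fpos ys" by (rule W_ge_len)
    have wx0: "int (length xs) \<le> S fpos xs" by (rule W_ge_len)
    have lx1: "1 \<le> length xs" using less.prems by (cases xs) auto
    have dec: "nat (S fpos ys * S fpos ys + (S fpos ys - int (length ys)))
             < nat (S fpos xs * S fpos xs + (S fpos xs - int (length xs)))"
    proof -
      let ?a = "S fpos ys" and ?b = "S fpos xs"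
      have a0: "0 \<le> ?a" using wy0 by simp
      from cases show ?thesis
      proof
        assume h: "?a < ?b \<and> length xs \<le> length ys"
        have "?a * ?a \<le> (?b - 1) * (?b - 1)" using a0 h by (intro mult_mono) auto
        then have aa: "?a * ?a \<le> ?b * ?b - 2 * ?b + 1" by (simp add: algebra_simps)
        have b1: "1 \<le> ?b" using wx0 lx1 by linarith
        have bb: "?b * 1 \<le> ?b * ?b" using b1 by (intro mult_left_mono) auto
        have "?a * ?a + (?a - int (length ys)) < ?b * ?b + (?b - int (length xs))"
          using aa b1 bb h wx0 wy0 by linarith
        moreover have "0 \<le> ?a * ?a + (?a - int (length ys))" using a0 wy0 by simp
        ultimately show ?thesis by simp
      next
        assume h: "?a = ?b \<and> length xs < length ys"
        have "0 \<le> ?a * ?a + (?a - int (length ys))" using a0 wy0 by simp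
        then show ?thesis using h by simp
      qed
    qed
    obtain k a b c where kabc: "1 \<le> a" "P (tup k a b c) = P ys" "length ys \<le> a+b+c"
      "S fpos (tup k a b c) \<le> S fpos ys"
      using less.hyps[OF dec yne] by blast
    show ?thesis using kabc Py cases by (intro exI[of _ k] exI[of _ a] exI[of _ b] exI[of _ c]) auto
  qed
qed



definition ig :: real where "ig = (sqrt 5 - 1) / 2"

lemma ig_sq: "ig * ig = 1 - ig"
proof -
  have "sqrt 5 * sqrt 5 = 5" by simp
  then show ?thesis unfolding ig_def by (simp add: field_simps algebra_simps)
qed

lemma ig_pos: "0 < ig"
proof -
  have "1 < sqrt 5" by (simp add: real_less_rsqrt)
  then show ?thesis by (simp add: ig_def)
qed

lemma ig_lt1: "ig < 1"
proof -
  have "sqrt 5 < 3" by (simp add: real_sqrt_less_iff real_less_lsqrt)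
  then show ?thesis by (simp add: ig_def)
qed

lemma ig_pow: "ig ^ n = of_int (fneg n) + of_int (fneg (Suc n)) * ig \<and>
                ig ^ Suc n = of_int (fneg (Suc n)) + of_int (fneg (Suc (Suc n))) * ig"
proof (induction n)
  case 0 then show ?case by simp
next
  case (Suc n)
  have "ig ^ Suc (Suc n) = ig ^ n * (ig * ig)" by (simp add: algebra_simps)
  also have "\<dots> = ig ^ n - ig ^ Suc n" by (simp add: ig_sq algebra_simps)
  finally have e: "ig ^ Suc (Suc n) = ig ^ n - ig ^ Suc n" .
  have f: "real_of_int (fneg (Suc (Suc n))) = of_int (fneg n) - of_int (fneg (Suc n))"
     "real_of_int (fneg (Suc (Suc (Suc n)))) = of_int (fneg (Suc n)) - of_int (fneg (Suc (Suc n)))"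
    by simp_all
  have g: "real_of_int (fneg (Suc (Suc (Suc n)))) * ig = of_int (fneg (Suc n)) * ig - of_int (fneg (Suc (Suc n))) * ig"
    unfolding f(2) by (simp add: algebra_simps)
  show ?case using Suc.IH e f(1) g by linarith
qed

definition alpha :: "nat list \<Rightarrow> real" where "alpha xs = S (\<lambda>n. ig ^ n) xs"

lemma alpha_P: "alpha xs = of_int (fst (P xs)) + of_int (snd (P xs)) * ig"
  unfolding alpha_def P_def
  by (induction xs) (auto simp: ig_pow[THEN conjunct1] algebra_simps)

lemma alpha_eq: "P xs = P ys \<Longrightarrow> alpha xs = alpha ys"
  by (simp add: alpha_P)

lemma alpha_tup: "alpha (tup k a b c) = a * ig ^ k + b * ig ^ Suc k + c * ig ^ Suc (Suc k)"
  by (simp add: alpha_def S_tup)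

lemma pow_le: "m \<le> n \<Longrightarrow> ig ^ n \<le> ig ^ m"
  using ig_pos ig_lt1 by (intro power_decreasing) auto

lemma pow_lt: "m < n \<Longrightarrow> ig ^ n < ig ^ m"
  using ig_pos ig_lt1 by (intro power_strict_decreasing) auto

lemma alpha_upper: "alpha (tup k a b c) \<le> (a + b + c) * ig ^ k"
proof -
  have p1: "ig ^ Suc k \<le> ig ^ k" "ig ^ Suc (Suc k) \<le> ig ^ k" by (rule pow_le, simp)+
  have "b * ig ^ Suc k \<le> b * ig ^ k" "c * ig ^ Suc (Suc k) \<le> c * ig ^ k"
    using p1 by (auto intro!: mult_left_mono)
  then show ?thesis by (simp add: alpha_tup algebra_simps)
qed

lemma alpha_lower:
  assumes "1 \<le> a"
  shows "ig ^ k + (real (a + b + c) - 1) * ig ^ Suc (Suc k) \<le> alpha (tup k a b c)"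
proof -
  have p1: "ig ^ Suc (Suc k) \<le> ig ^ Suc k" "ig ^ Suc (Suc k) \<le> ig ^ k" by (rule pow_le, simp)+
  have "(real a - 1) * ig ^ Suc (Suc k) \<le> (real a - 1) * ig ^ k"
    using assms p1 by (intro mult_left_mono) auto
  moreover have "b * ig ^ Suc (Suc k) \<le> b * ig ^ Suc k"
    using p1 by (auto intro!: mult_left_mono)
  ultimately show ?thesis by (simp add: alpha_tup algebra_simps)
qed

lemma cassini: "fneg n * fneg (Suc (Suc n)) - fneg (Suc n) * fneg (Suc n) = 1 \<or>
                fneg n * fneg (Suc (Suc n)) - fneg (Suc n) * fneg (Suc n) = -1"
proof (induction n)
  case 0 then show ?case by simp
next
  case (Suc n)
  have "fneg (Suc n) * fneg (Suc (Suc (Suc n))) - fneg (Suc (Suc n)) * fneg (Suc (Suc n))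
      = - (fneg n * fneg (Suc (Suc n)) - fneg (Suc n) * fneg (Suc n))"
    by (simp add: algebra_simps)
  then show ?case using Suc by auto
qed

lemma indep:
  fixes x y :: int
  assumes "x * fneg (Suc k) + y * fneg (Suc (Suc k)) = 0"
      and "x * fneg (Suc (Suc k)) + y * fneg (Suc (Suc (Suc k))) = 0"
  shows "x = 0 \<and> y = 0"
proof -
  define D where "D = fneg (Suc k) * fneg (Suc (Suc (Suc k))) - fneg (Suc (Suc k)) * fneg (Suc (Suc k))"
  have D: "D = 1 \<or> D = -1" using cassini[of "Suc k"] by (simp add: D_def)
  have "x * D = fneg (Suc (Suc (Suc k))) * (x * fneg (Suc k) + y * fneg (Suc (Suc k)))
              - fneg (Suc (Suc k)) * (x * fneg (Suc (Suc k)) + y * fneg (Suc (Suc (Suc k))))"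
    by (simp add: D_def algebra_simps)
  then have "x * D = 0" using assms by simp
  then have x0: "x = 0" using D by auto
  have "y * D = fneg (Suc k) * (x * fneg (Suc (Suc k)) + y * fneg (Suc (Suc (Suc k))))
              - fneg (Suc (Suc k)) * (x * fneg (Suc k) + y * fneg (Suc (Suc k)))"
    by (simp add: D_def algebra_simps)
  then have "y * D = 0" using assms by simp
  then have "y = 0" using D by auto
  with x0 show ?thesis by simp
qed

lemma fneg3: "fneg (Suc (Suc (Suc k))) = fneg (Suc k) - fneg (Suc (Suc k))" by simp



lemma fpos_gt0[simp]: "0 < fpos n" "0 \<le> fpos n"
  using fpos_pos[of n] by auto

lemma lrec_k0: "lrec g \<Longrightarrow> g k = g (Suc k) + g (Suc (Suc k))" by (rule lrecD)
lemma lrec_k3: "lrec (g::nat\<Rightarrow>int) \<Longrightarrow> g (Suc (Suc (Suc k))) = g (Suc k) - g (Suc (Suc k))"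
  using lrecD[of g "Suc k"] by simp

lemma S_tup_coord:
  assumes "lrec (g::nat\<Rightarrow>int)"
  shows "S g (tup k a b c) = int (a+b) * g (Suc k) + int (a+c) * g (Suc (Suc k))"
  unfolding S_tup lrec_k0[OF assms, of k] by (simp add: algebra_simps)

lemma S_tup_coord1:
  assumes "lrec (g::nat\<Rightarrow>int)"
  shows "S g (tup (Suc k) a b c) = (int a + int c) * g (Suc k) + (int b - int c) * g (Suc (Suc k))"
  unfolding S_tup lrec_k3[OF assms, of k] by (simp add: algebra_simps)

lemma S_tup_coordm1:
  assumes "lrec (g::nat\<Rightarrow>int)"
  shows "S g (tup k a b c) = (2 * int a + int b + int c) * g (Suc (Suc k)) + (int a + int b) * g (Suc (Suc (Suc k)))"
  unfolding S_tup lrec_k0[OF assms, of k] lrec_k0[OF assms, of "Suc k"] by (simp add: algebra_simps)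

lemma coord_eq:
  fixes x y x' y' :: int
  assumes "\<And>g::nat\<Rightarrow>int. lrec g \<Longrightarrow> x * g (Suc k) + y * g (Suc (Suc k)) = x' * g (Suc k) + y' * g (Suc (Suc k))"
  shows "x = x' \<and> y = y'"
proof -
  have "(x - x') * fneg (Suc k) + (y - y') * fneg (Suc (Suc k)) = 0"
    using assms[OF lrec_fneg] by (simp add: algebra_simps)
  moreover have "(x - x') * fneg (Suc (Suc k)) + (y - y') * fneg (Suc (Suc (Suc k))) = 0"
    using assms[OF lrec_fneg1] by (simp add: algebra_simps)
  ultimately show ?thesis using indep[of "x - x'" k "y - y'"] by simp
qed

lemma lrec_rep:
  assumes "lrec (g::nat\<Rightarrow>int)"
  shows "g n = g 0 * fneg n + g 1 * fneg (Suc n) \<and> g (Suc n) = g 0 * fneg (Suc n) + g 1 * fneg (Suc (Suc n))"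
proof (induction n)
  case 0 then show ?case by simp
next
  case (Suc n)
  have "g (Suc (Suc n)) = g n - g (Suc n)" using lrecD[OF assms, of n] by simp
  then show ?case using Suc by (simp add: algebra_simps)
qed

lemma S_rep: assumes "lrec (g::nat\<Rightarrow>int)" shows "S g xs = g 0 * fst (P xs) + g 1 * snd (P xs)"
  unfolding P_def
proof (induction xs)
  case (Cons x xs)
  have "g x = g 0 * fneg x + g 1 * fneg (Suc x)" using lrec_rep[OF assms, of x] by blast
  then show ?case using Cons by (simp add: algebra_simps)
qed simp

lemma P_S: "P xs = P ys \<Longrightarrow> lrec (g::nat\<Rightarrow>int) \<Longrightarrow> S g xs = S g ys"
  by (simp add: S_rep)

lemma WC:
  assumes a1: "1 \<le> a" and a1': "1 \<le> a'" and PP: "P (tup k a b c) = P (tup k' a' b' c')"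
    and ss: "a+b+c \<le> a'+b'+c'"
  shows "(k = k' \<and> a = a' \<and> b = b' \<and> c = c') \<or>
         (a+b+c < a'+b'+c' \<and> S fpos (tup k a b c) + 2 * fpos (Suc k) \<le> S fpos (tup k' a' b' c'))"
proof -
  have SS: "\<And>g::nat\<Rightarrow>int. lrec g \<Longrightarrow> S g (tup k a b c) = S g (tup k' a' b' c')"
    using P_S[OF PP] .
  have F: "fpos (Suc (Suc k)) = fpos (Suc k) + fpos k" by simp
  have F1: "1 \<le> fpos (Suc k)" by (rule fpos_pos)
  consider "k' = k" | "k' = Suc k" | "k = Suc k'" | "Suc (Suc k) \<le> k'" | "Suc (Suc k') \<le> k" by linarith
  then show ?thesis
  proof cases
    case 1
    have "int (a+b) = int (a'+b') \<and> int (a+c) = int (a'+c')"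
      by (rule coord_eq[where k=k]) (use SS 1 S_tup_coord in auto)
    then have e: "int b' = int a + int b - int a'" "int c' = int a + int c - int a'" by auto
    show ?thesis
    proof (cases "a' = a")
      case True then show ?thesis using e 1 by auto
    next
      case False
      then have lt: "a' < a" using e ss by linarith
      have "S fpos (tup k' a' b' c') - S fpos (tup k a b c) = (int a - int a') * (2 * fpos (Suc k))"
        unfolding 1 S_tup e F by (simp add: algebra_simps)
      moreover have "(int a - int a') * (2 * fpos (Suc k)) \<ge> 1 * (2 * fpos (Suc k))"
        using lt F1 by (intro mult_right_mono) auto
      ultimately have "S fpos (tup k a b c) + 2 * fpos (Suc k) \<le> S fpos (tup k' a' b' c')" by linarith
      moreover have "a+b+c < a'+b'+c'" using lt e by linarith
      ultimately show ?thesis by auto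
    qed
  next
    case 2
    have "int (a+b) = int a' + int c' \<and> int (a+c) = int b' - int c'"
      by (rule coord_eq[where k=k]) (use SS 2 S_tup_coord S_tup_coord1 in auto)
    then have e: "int a + int b = int a' + int c'" "int a + int c = int b' - int c'" by auto
    have F3: "fpos (Suc (Suc (Suc k))) = fpos (Suc (Suc k)) + fpos (Suc k)" by simp
    have "S fpos (tup k' a' b' c') - S fpos (tup k a b c) = 2 * int c' * fpos (Suc (Suc k)) + 2 * int a * fpos (Suc k)"
    proof -
      have ea: "int a' = int a + int b - int c'" and eb: "int b' = int a + int c + int c'" using e by auto
      show ?thesis unfolding 2 S_tup ea eb F3 F by (simp add: algebra_simps)
    qed
    moreover have "2 * int a * fpos (Suc k) \<ge> 2 * 1 * fpos (Suc k)"
      using a1 F1 by (intro mult_right_mono) auto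
    moreover have "0 \<le> 2 * int c' * fpos (Suc (Suc k))" using fpos_pos[of "Suc (Suc k)"] by simp
    ultimately have "S fpos (tup k a b c) + 2 * fpos (Suc k) \<le> S fpos (tup k' a' b' c')" by linarith
    moreover have "a+b+c < a'+b'+c'" using e a1 by linarith
    ultimately show ?thesis by auto
  next
    case 3
    have "int (a+b) = 2 * int a' + int b' + int c' \<and> int (a+c) = int a' + int b'"
      by (rule coord_eq[where k=k]) (use SS 3 S_tup_coord S_tup_coordm1 in auto)
    then show ?thesis using ss a1' by linarith
  next
    case 4
    show ?thesis
    proof (cases "a+b+c = a'+b'+c'")
      case True
      have al: "alpha (tup k a b c) = alpha (tup k' a' b' c')" using alpha_eq[OF PP] .
      have "alpha (tup k' a' b' c') \<le> real (a'+b'+c') * ig ^ k'" using alpha_upper[of k' a' b' c'] by simp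
      also have "\<dots> \<le> real (a+b+c) * ig ^ Suc (Suc k)"
      proof -
        have "ig ^ k' \<le> ig ^ Suc (Suc k)" using 4 by (rule pow_le)
        then show ?thesis using True by (simp add: mult_left_mono)
      qed
      finally have u: "alpha (tup k' a' b' c') \<le> real (a+b+c) * ig ^ Suc (Suc k)" .
      have l: "ig ^ k + (real (a+b+c) - 1) * ig ^ Suc (Suc k) \<le> alpha (tup k a b c)"
        by (rule alpha_lower[OF a1])
      have "ig ^ Suc (Suc k) < ig ^ k" by (rule pow_lt) simp
      then show ?thesis using u l al by (simp add: algebra_simps)
    next
      case False
      then have lt: "a+b+c < a'+b'+c'" using ss by simp
      have mk: "\<And>j. fpos (Suc (Suc k)) \<le> fpos (k' + j)" using 4 by (intro fpos_mono) simp
      have "S fpos (tup k' a' b' c') \<ge> int (a'+b'+c') * fpos (Suc (Suc k))"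
      proof -
        have h: "fpos (Suc (Suc k)) \<le> fpos k'" "fpos (Suc (Suc k)) \<le> fpos (Suc k')"
          "fpos (Suc (Suc k)) \<le> fpos (Suc (Suc k'))" using mk[of 0] mk[of 1] mk[of 2] by simp_all
        have m: "int a' * fpos (Suc (Suc k)) \<le> int a' * fpos k'"
          "int b' * fpos (Suc (Suc k)) \<le> int b' * fpos (Suc k')"
          "int c' * fpos (Suc (Suc k)) \<le> int c' * fpos (Suc (Suc k'))"
          using h by (auto intro: mult_left_mono)
        have eqM: "S fpos (tup k' a' b' c') = of_nat a' * fpos k' + of_nat b' * fpos (Suc k') + of_nat c' * fpos (Suc (Suc k'))"
          by (rule S_tup)
        have eqS: "int (a'+b'+c') * fpos (Suc (Suc k)) = int a' * fpos (Suc (Suc k)) + int b' * fpos (Suc (Suc k)) + int c' * fpos (Suc (Suc k))"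
          by (simp add: algebra_simps)
        show ?thesis using m eqM eqS by linarith
      qed
      moreover have "int (a'+b'+c') * fpos (Suc (Suc k)) \<ge> (int (a+b+c) + 1) * fpos (Suc (Suc k))"
        using lt fpos_pos[of "Suc (Suc k)"] by (intro mult_right_mono) auto
      moreover have "S fpos (tup k a b c) + 2 * fpos (Suc k) \<le> (int (a+b+c) + 1) * fpos (Suc (Suc k))"
      proof -
        have "int b * fpos (Suc k) \<le> int b * fpos (Suc (Suc k))"
          using fpos_pos[of k] by (intro mult_left_mono) auto
        moreover have "(int a - 1) * fpos k \<le> (int a - 1) * fpos (Suc (Suc k))"
          using a1 by (intro mult_left_mono) (auto simp: fpos_mono)
        then have "int a * fpos k - fpos k \<le> int a * fpos (Suc (Suc k)) - fpos (Suc (Suc k))"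
          by (simp add: algebra_simps)
        moreover have "S fpos (tup k a b c) = of_nat a * fpos k + of_nat b * fpos (Suc k) + of_nat c * fpos (Suc (Suc k))"
          by (rule S_tup)
        moreover have "(int (a+b+c) + 1) * fpos (Suc (Suc k)) = int a * fpos (Suc (Suc k)) + int b * fpos (Suc (Suc k)) + int c * fpos (Suc (Suc k)) + fpos (Suc (Suc k))"
          by (simp add: algebra_simps)
        ultimately show ?thesis using F fpos_pos[of k] by linarith
      qed
      ultimately show ?thesis using lt by auto
    qed
  next
    case 5
    have al: "alpha (tup k a b c) = alpha (tup k' a' b' c')" using alpha_eq[OF PP] .
    have u: "alpha (tup k a b c) \<le> real (a+b+c) * ig ^ k" using alpha_upper[of k a b c] by simp
    have l: "ig ^ k' + (real (a'+b'+c') - 1) * ig ^ Suc (Suc k') \<le> alpha (tup k' a' b' c')"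
      by (rule alpha_lower[OF a1'])
    have p1: "ig ^ k < ig ^ k'" using 5 by (intro pow_lt) simp
    have p2: "ig ^ k \<le> ig ^ Suc (Suc k')" using 5 by (intro pow_le) simp
    have s1: "real (a'+b'+c') - 1 \<ge> 0" using a1' by simp
    have "(real (a'+b'+c') - 1) * ig ^ k \<le> (real (a'+b'+c') - 1) * ig ^ Suc (Suc k')"
      using p2 s1 by (rule mult_left_mono)
    moreover have "real (a+b+c) * ig ^ k \<le> real (a'+b'+c') * ig ^ k"
      using ss ig_pos by (intro mult_right_mono) auto
    ultimately show ?thesis using u l al p1 by (simp add: algebra_simps)
  qed
qed



lemma fib_ext_neg: "0 \<le> i \<Longrightarrow> fib_ext (- i) = fneg (nat i)"
  by (cases "i = 0") (auto simp: fib_ext_def)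

lemma fib_ext_neg1: "0 \<le> i \<Longrightarrow> fib_ext (- i - 1) = fneg (Suc (nat i))"
  by (auto simp: fib_ext_def nat_diff_distrib' Suc_nat_eq_nat_zadd1 add.commute)

lemma fib_ext_pos: "0 \<le> i \<Longrightarrow> fib_ext i = fpos (nat i)"
  by (simp add: fib_ext_def)

lemma sum_list_insort: "sum_list (map (g::int\<Rightarrow>int) (insort x xs)) = g x + sum_list (map g xs)"
  by (induction xs) (auto simp: algebra_simps)

lemma sum_list_sort: "sum_list (map (g::int\<Rightarrow>int) (sort xs)) = sum_list (map g xs)"
  by (induction xs) (auto simp: sum_list_insort)

definition adm :: "nat \<Rightarrow> int \<times> int \<Rightarrow> nat \<Rightarrow> bool" where
  "adm d p s \<longleftrightarrow> (\<exists>xs. length xs = s \<and> P xs = p \<and> S fpos xs \<le> int d)"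

lemma sums_conv:
  assumes "\<forall>i\<in>set is. 0 \<le> i"
  shows "(\<Sum>i\<leftarrow>is. fib_ext (- i)) = S fneg (map nat is)"
    "(\<Sum>i\<leftarrow>is. fib_ext (- i - 1)) = S (\<lambda>n. fneg (Suc n)) (map nat is)"
    "(\<Sum>i\<leftarrow>is. fib_ext i) = S fpos (map nat is)"
  using assms by (induction "is") (auto simp: fib_ext_neg fib_ext_neg1 fib_ext_pos)

lemma admits_adm: "admits d p s = adm d p s"
proof
  assume "admits d p s"
  then obtain "is" where h: "length is = s" "\<forall>i\<in>set is. 0 \<le> i"
    "p = ((\<Sum>i\<leftarrow>is. fib_ext (- i)), (\<Sum>i\<leftarrow>is. fib_ext (- i - 1)))" "(\<Sum>i\<leftarrow>is. fib_ext i) \<le> int d"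
    unfolding admits_def by blast
  show "adm d p s" unfolding adm_def
    by (rule exI[of _ "map nat is"]) (use h sums_conv[OF h(2)] in \<open>auto simp: P_def\<close>)
next
  assume "adm d p s"
  then obtain xs where h: "length xs = s" "P xs = p" "S fpos xs \<le> int d" unfolding adm_def by blast
  define "is" where "is = sort (map int xs)"
  have nn: "\<forall>i\<in>set is. 0 \<le> i" by (auto simp: is_def)
  have mi: "map nat is = map nat (sort (map int xs))" by (simp add: is_def)
  have e: "\<And>g::int\<Rightarrow>int. (\<Sum>i\<leftarrow>is. g i) = (\<Sum>i\<leftarrow>map int xs. g i)"
    unfolding is_def by (rule sum_list_sort)
  have c1: "(\<Sum>i\<leftarrow>map int xs. fib_ext (- i)) = S fneg xs"
    "(\<Sum>i\<leftarrow>map int xs. fib_ext (- i - 1)) = S (\<lambda>n. fneg (Suc n)) xs"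
    "(\<Sum>i\<leftarrow>map int xs. fib_ext i) = S fpos xs"
    using sums_conv[of "map int xs"] by (auto simp: comp_def)
  show "admits d p s" unfolding admits_def
    apply (rule exI[of _ "is"])
    using h nn e[of "\<lambda>i. fib_ext (- i)"] e[of "\<lambda>i. fib_ext (- i - 1)"] e[of fib_ext] c1
    by (auto simp: is_def P_def)
qed



definition wt :: "nat \<Rightarrow> nat \<Rightarrow> nat \<Rightarrow> nat \<Rightarrow> int" where
  "wt k a b c = int a * fpos k + int b * fpos (Suc k) + int c * fpos (Suc (Suc k))"

lemma S_fpos_tup: "S fpos (tup k a b c) = wt k a b c"
  by (simp add: S_tup wt_def)

definition R :: "nat \<Rightarrow> nat \<Rightarrow> (nat \<times> nat \<times> nat \<times> nat) set" where
  "R d s = {(k,a,b,c). 1 \<le> a \<and> a+b+c = s \<and> wt k a b c \<le> int d \<and> int d < wt k a b c + 2 * fpos (Suc k)}"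

definition pt :: "nat \<times> nat \<times> nat \<times> nat \<Rightarrow> int \<times> int" where
  "pt x = (case x of (k,a,b,c) \<Rightarrow> P (tup k a b c))"

lemma eqEds: "p \<in> Eds d s \<longleftrightarrow> adm d p s \<and> (\<forall>t. s < t \<longrightarrow> \<not> adm d p t)"
  by (simp add: Eds_def admits_adm)

lemma P_eq_lrec: "(\<And>g::nat\<Rightarrow>int. lrec g \<Longrightarrow> S g xs = S g ys) \<Longrightarrow> P xs = P ys"
  using lrec_fneg lrec_fneg1 by (simp add: P_def)

lemma split_tup:
  assumes "1 \<le> a"
  shows "\<exists>k' a' b' c'. P (tup k' a' b' c') = P (tup k a b c) \<and> a'+b'+c' = a+b+c+1 \<and>
           wt k' a' b' c' = wt k a b c + 2 * fpos (Suc k)"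
proof (cases "2 \<le> a")
  case True
  show ?thesis
  proof (intro exI conjI)
    show "P (tup k (a-1) (b+1) (c+1)) = P (tup k a b c)"
    proof (rule P_eq_lrec)
      fix g :: "nat \<Rightarrow> int" assume "lrec g"
      then have "g k = g (Suc k) + g (Suc (Suc k))" by (rule lrecD)
      then show "S g (tup k (a-1) (b+1) (c+1)) = S g (tup k a b c)"
        using True by (simp add: S_tup of_nat_diff algebra_simps)
    qed
    show "a - 1 + (b + 1) + (c + 1) = a + b + c + 1" using True by simp
    show "wt k (a-1) (b+1) (c+1) = wt k a b c + 2 * fpos (Suc k)"
      using True by (simp add: wt_def of_nat_diff algebra_simps)
  qed
next
  case False
  then have a: "a = 1" using assms by simp
  show ?thesis
  proof (intro exI conjI)
    show "P (tup (Suc k) (b+1) (c+1) 0) = P (tup k a b c)"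
    proof (rule P_eq_lrec)
      fix g :: "nat \<Rightarrow> int" assume "lrec g"
      then have "g k = g (Suc k) + g (Suc (Suc k))" by (rule lrecD)
      then show "S g (tup (Suc k) (b+1) (c+1) 0) = S g (tup k a b c)"
        using a by (simp add: S_tup algebra_simps)
    qed
    show "b + 1 + (c + 1) + 0 = a + b + c + 1" using a by simp
    show "wt (Suc k) (b+1) (c+1) 0 = wt k a b c + 2 * fpos (Suc k)"
      using a by (simp add: wt_def algebra_simps)
  qed
qed

lemma S_pos_alpha: "xs \<noteq> [] \<Longrightarrow> 0 < alpha xs"
proof (induction xs)
  case (Cons x xs)
  have "0 < ig ^ x" using ig_pos by simp
  moreover have "0 \<le> alpha xs" using Cons by (cases xs) (auto simp: alpha_def)
  ultimately show ?case by (simp add: alpha_def)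
qed simp

lemma Eds_0: "Eds d 0 = {(0,0)}"
proof -
  have a0: "adm d p 0 \<longleftrightarrow> p = (0,0)" for p by (auto simp: adm_def P_def)
  have "\<not> adm d (0,0) t" if "0 < t" for t
  proof
    assume "adm d (0,0) t"
    then obtain xs where "length xs = t" "P xs = (0,0)" unfolding adm_def by blast
    then have "xs \<noteq> []" "alpha xs = 0" using that by (auto simp: alpha_P)
    then show False using S_pos_alpha by fastforce
  qed
  then show ?thesis using a0 by (auto simp: eqEds)
qed

lemma adm_le: assumes "adm d p s" shows "s \<le> d"
proof -
  obtain xs where "length xs = s" "S fpos xs \<le> int d" using assms unfolding adm_def by blast
  then show ?thesis using W_ge_len[of xs] by linarith
qed

lemma Eds_big: "d < s \<Longrightarrow> Eds d s = {}"
  using adm_le by (force simp: eqEds)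

lemma Eds_char:
  assumes "1 \<le> s"
  shows "Eds d s = pt ` R d s"
proof
  show "Eds d s \<subseteq> pt ` R d s"
  proof
    fix p assume p: "p \<in> Eds d s"
    then obtain xs where xs: "length xs = s" "P xs = p" "S fpos xs \<le> int d"
      by (auto simp: eqEds adm_def)
    have max: "\<And>t. s < t \<Longrightarrow> \<not> adm d p t" using p by (simp add: eqEds)
    have "xs \<noteq> []" using xs assms by auto
    then obtain k a b c where kabc: "1 \<le> a" "P (tup k a b c) = P xs" "length xs \<le> a+b+c"
      "S fpos (tup k a b c) \<le> S fpos xs" using normal_form by blast
    have cnt: "a+b+c = s"
    proof (rule ccontr)
      assume "a+b+c \<noteq> s"
      then have "s < a+b+c" using kabc xs by simp
      moreover have "adm d p (a+b+c)" unfolding adm_def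
        using kabc xs by (intro exI[of _ "tup k a b c"]) auto
      ultimately show False using max by blast
    qed
    have w: "wt k a b c \<le> int d" using kabc xs by (simp add: S_fpos_tup)
    have w2: "int d < wt k a b c + 2 * fpos (Suc k)"
    proof (rule ccontr)
      assume ng: "\<not> ?thesis"
      obtain k' a' b' c' where sp: "P (tup k' a' b' c') = P (tup k a b c)" "a'+b'+c' = a+b+c+1"
        "wt k' a' b' c' = wt k a b c + 2 * fpos (Suc k)" using split_tup[OF kabc(1)] by blast
      have "adm d p (s+1)" unfolding adm_def
        using sp kabc xs cnt ng by (intro exI[of _ "tup k' a' b' c'"]) (auto simp: S_fpos_tup)
      then show False using max by simp
    qed
    have "(k,a,b,c) \<in> R d s" using kabc cnt w w2 by (simp add: R_def)
    moreover have "pt (k,a,b,c) = p" using kabc xs by (simp add: pt_def)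
    ultimately show "p \<in> pt ` R d s" by force
  qed
next
  show "pt ` R d s \<subseteq> Eds d s"
  proof
    fix p assume "p \<in> pt ` R d s"
    then obtain k a b c where kabc: "(k,a,b,c) \<in> R d s" "p = P (tup k a b c)"
      by (auto simp: pt_def)
    have r: "1 \<le> a" "a+b+c = s" "wt k a b c \<le> int d" "int d < wt k a b c + 2 * fpos (Suc k)"
      using kabc by (auto simp: R_def)
    have "adm d p s" unfolding adm_def using r kabc
      by (intro exI[of _ "tup k a b c"]) (auto simp: S_fpos_tup)
    moreover have "\<not> adm d p t" if "s < t" for t
    proof
      assume "adm d p t"
      then obtain xs where xs: "length xs = t" "P xs = p" "S fpos xs \<le> int d" unfolding adm_def by blast
      have "xs \<noteq> []" using xs that by auto
      then obtain k' a' b' c' where m: "1 \<le> a'" "P (tup k' a' b' c') = P xs" "length xs \<le> a'+b'+c'"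
        "S fpos (tup k' a' b' c') \<le> S fpos xs" using normal_form by blast
      have "(k = k' \<and> a = a' \<and> b = b' \<and> c = c') \<or>
         (a+b+c < a'+b'+c' \<and> S fpos (tup k a b c) + 2 * fpos (Suc k) \<le> S fpos (tup k' a' b' c'))"
        by (rule WC[OF r(1) m(1)]) (use m xs kabc r that in auto)
      then show False using m xs r that by (auto simp: S_fpos_tup)
    qed
    ultimately show "p \<in> Eds d s" by (simp add: eqEds)
  qed
qed

lemma pt_inj: "inj_on pt (R d s)"
proof (rule inj_onI)
  fix x y assume x: "x \<in> R d s" and y: "y \<in> R d s" and e: "pt x = pt y"
  obtain k a b c where xx: "x = (k,a,b,c)" by (cases x) auto
  obtain k' a' b' c' where yy: "y = (k',a',b',c')" by (cases y) auto
  have r: "1 \<le> a" "a+b+c = s" "1 \<le> a'" "a'+b'+c' = s" using x y xx yy by (auto simp: R_def)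
  have pe: "P (tup k a b c) = P (tup k' a' b' c')" using e xx yy by (simp add: pt_def)
  have "(k = k' \<and> a = a' \<and> b = b' \<and> c = c') \<or>
         (a+b+c < a'+b'+c' \<and> S fpos (tup k a b c) + 2 * fpos (Suc k) \<le> S fpos (tup k' a' b' c'))"
    by (rule WC[OF r(1) r(3) pe]) (use r in simp)
  then show "x = y" using r xx yy by auto
qed

lemma R_sub: "R d s \<subseteq> {0..d} \<times> {0..s} \<times> {0..s} \<times> {0..s}"
proof
  fix x assume x: "x \<in> R d s"
  obtain k a b c where xx: "x = (k,a,b,c)" by (cases x) auto
  have r: "1 \<le> a" "a+b+c = s" "wt k a b c \<le> int d" using x xx by (auto simp: R_def)
  have "int k \<le> fpos k" by (rule fpos_ge)
  also have "fpos k \<le> int a * fpos k" using r(1) by simp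
  also have "\<dots> \<le> wt k a b c" by (simp add: wt_def)
  finally have "k \<le> d" using r(3) by linarith
  then show "x \<in> {0..d} \<times> {0..s} \<times> {0..s} \<times> {0..s}" using xx r by auto
qed

lemma R_fin: "finite (R d s)"
  by (rule finite_subset[OF R_sub]) auto



definition phi :: "nat \<times> nat \<times> nat \<times> nat \<Rightarrow> nat \<times> nat \<times> nat \<times> nat" where
  "phi x = (case x of (k,a,b,c) \<Rightarrow>
     if a = 2 then (if 1 \<le> b then (Suc k, b, c+2, 0) else (Suc (Suc k), c+2, 0, 0))
     else (if 1 \<le> b then (Suc k, b, c, 1) else if 1 \<le> c then (Suc (Suc k), c, 1, 0)
           else (Suc (Suc (Suc k)), 1, 0, 0)))"

definition wtt :: "nat \<times> nat \<times> nat \<times> nat \<Rightarrow> int" where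
  "wtt x = (case x of (k,a,b,c) \<Rightarrow> wt k a b c)"

lemma wtt_simp[simp]: "wtt (k,a,b,c) = wt k a b c" by (simp add: wtt_def)

lemma wt_phi:
  assumes "1 \<le> a" "a \<le> 2"
  shows "wtt (phi (k,a,b,c)) = wt k a b c + 2 * fpos (Suc k)"
proof -
  consider "a = 2" "1 \<le> b" | "a = 2" "b = 0" | "a = 1" "1 \<le> b" | "a = 1" "b = 0" "1 \<le> c" | "a = 1" "b = 0" "c = 0"
    using assms by linarith
  then show ?thesis
    by cases (simp_all add: phi_def wt_def algebra_simps)
qed

lemma cnt_phi:
  assumes "1 \<le> a" "a \<le> 2"
  shows "case phi (k,a,b,c) of (k',a',b',c') \<Rightarrow> 1 \<le> a' \<and> c' \<le> 1 \<and> a'+b'+c' = a+b+c"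
proof -
  consider "a = 2" "1 \<le> b" | "a = 2" "b = 0" | "a = 1" "1 \<le> b" | "a = 1" "b = 0" "1 \<le> c" | "a = 1" "b = 0" "c = 0"
    using assms by linarith
  then show ?thesis by cases (simp_all add: phi_def)
qed

definition XX :: "nat \<Rightarrow> nat \<Rightarrow> (nat \<times> nat \<times> nat \<times> nat) set" where
  "XX d s = {(k,a,b,c). 1 \<le> a \<and> a+b+c = s \<and> wt k a b c \<le> int d}"
definition YY :: "nat \<Rightarrow> nat \<Rightarrow> (nat \<times> nat \<times> nat \<times> nat) set" where
  "YY d s = {(k,a,b,c). 1 \<le> a \<and> a+b+c = s \<and> wt k a b c + 2 * fpos (Suc k) \<le> int d}"

lemma XX_sub: "XX d s \<subseteq> {0..d} \<times> {0..s} \<times> {0..s} \<times> {0..s}"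
proof
  fix x assume x: "x \<in> XX d s"
  obtain k a b c where xx: "x = (k,a,b,c)" by (cases x) auto
  have r: "1 \<le> a" "a+b+c = s" "wt k a b c \<le> int d" using x xx by (auto simp: XX_def)
  have "int k \<le> fpos k" by (rule fpos_ge)
  also have "fpos k \<le> int a * fpos k" using r(1) by simp
  also have "\<dots> \<le> wt k a b c" by (simp add: wt_def)
  finally have "k \<le> d" using r(3) by linarith
  then show "x \<in> {0..d} \<times> {0..s} \<times> {0..s} \<times> {0..s}" using xx r by auto
qed

lemma XX_fin: "finite (XX d s)" by (rule finite_subset[OF XX_sub]) auto

lemma YY_XX: "YY d s \<subseteq> XX d s"
  by (auto simp: YY_def XX_def) (smt (verit) fpos_gt0(1))

lemma YY_fin: "finite (YY d s)" by (rule finite_subset[OF YY_XX XX_fin])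

lemma R_XY: "R d s = XX d s - YY d s"
  by (auto simp: R_def XX_def YY_def)

lemma card_R1: "card (R d s) = card (XX d s) - card (YY d s)"
  unfolding R_XY using YY_XX by (simp add: card_Diff_subset YY_fin)

definition sh :: "nat \<times> nat \<times> nat \<times> nat \<Rightarrow> nat \<times> nat \<times> nat \<times> nat" where
  "sh x = (case x of (k,a,b,c) \<Rightarrow> (k, a - 2, b, c + 2))"

lemma card_shift: "card {x \<in> YY d s. case x of (k,a,b,c) \<Rightarrow> 3 \<le> a} = card {x \<in> XX d s. case x of (k,a,b,c) \<Rightarrow> 2 \<le> c}"
proof (rule bij_betw_same_card[of sh])
  show "bij_betw sh {x \<in> YY d s. case x of (k,a,b,c) \<Rightarrow> 3 \<le> a} {x \<in> XX d s. case x of (k,a,b,c) \<Rightarrow> 2 \<le> c}"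
  proof (rule bij_betw_byWitness[where f' = "\<lambda>x. case x of (k,a,b,c) \<Rightarrow> (k, a + 2, b, c - 2)"])
    show "\<forall>x\<in>{x \<in> YY d s. case x of (k,a,b,c) \<Rightarrow> 3 \<le> a}. (case sh x of (k,a,b,c) \<Rightarrow> (k, a + 2, b, c - 2)) = x"
      by (auto simp: sh_def)
    show "\<forall>y\<in>{x \<in> XX d s. case x of (k,a,b,c) \<Rightarrow> 2 \<le> c}. sh (case y of (k,a,b,c) \<Rightarrow> (k, a + 2, b, c - 2)) = y"
      by (auto simp: sh_def)
    show "sh ` {x \<in> YY d s. case x of (k,a,b,c) \<Rightarrow> 3 \<le> a} \<subseteq> {x \<in> XX d s. case x of (k,a,b,c) \<Rightarrow> 2 \<le> c}"
    proof
      fix y assume "y \<in> sh ` {x \<in> YY d s. case x of (k,a,b,c) \<Rightarrow> 3 \<le> a}"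
      then obtain k a b c where h: "(k,a,b,c) \<in> YY d s" "3 \<le> a" "y = (k, a-2, b, c+2)"
        by (auto simp: sh_def)
      have "wt k (a-2) b (c+2) = wt k a b c + 2 * fpos (Suc k)"
        using h(2) by (simp add: wt_def of_nat_diff algebra_simps)
      then show "y \<in> {x \<in> XX d s. case x of (k,a,b,c) \<Rightarrow> 2 \<le> c}"
        using h by (auto simp: YY_def XX_def)
    qed
    show "(\<lambda>x. case x of (k,a,b,c) \<Rightarrow> (k, a + 2, b, c - 2)) ` {x \<in> XX d s. case x of (k,a,b,c) \<Rightarrow> 2 \<le> c} \<subseteq> {x \<in> YY d s. case x of (k,a,b,c) \<Rightarrow> 3 \<le> a}"
    proof
      fix y assume "y \<in> (\<lambda>x. case x of (k,a,b,c) \<Rightarrow> (k, a + 2, b, c - 2)) ` {x \<in> XX d s. case x of (k,a,b,c) \<Rightarrow> 2 \<le> c}"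
      then obtain k a b c where h: "(k,a,b,c) \<in> XX d s" "2 \<le> c" "y = (k, a+2, b, c-2)"
        by auto
      have "wt k (a+2) b (c-2) + 2 * fpos (Suc k) = wt k a b c"
        using h(2) by (simp add: wt_def of_nat_diff algebra_simps)
      then show "y \<in> {x \<in> YY d s. case x of (k,a,b,c) \<Rightarrow> 3 \<le> a}"
        using h by (auto simp: YY_def XX_def)
    qed
  qed
qed

abbreviation X01 where "X01 d s \<equiv> {x \<in> XX d s. case x of (k,a,b,c) \<Rightarrow> c \<le> 1}"
abbreviation Y12 where "Y12 d s \<equiv> {x \<in> YY d s. case x of (k,a,b,c) \<Rightarrow> a \<le> 2}"

definition ZZ :: "nat \<Rightarrow> nat \<Rightarrow> (nat \<times> nat \<times> nat \<times> nat) set" where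
  "ZZ d s = (if s \<le> d then (\<lambda>a. (0,a,s-a,0)) ` {1..s} else {})
          \<union> (if s \<le> d then {(1,s,0,0)} else {})
          \<union> (if 2 \<le> s \<and> s+1 \<le> d then {(1,s-1,1,0)} else {})
          \<union> (if s+1 \<le> d then (\<lambda>a. (0,a,s-1-a,1)) ` {1..s-1} else {})
          \<union> (if s = 1 \<and> 2 \<le> d then {(2,1,0,0)} else {})"

lemma phi_img: "phi ` Y12 d s \<subseteq> X01 d s"
proof
  fix x assume "x \<in> phi ` Y12 d s"
  then obtain k a b c where h: "(k,a,b,c) \<in> YY d s" "a \<le> 2" "x = phi (k,a,b,c)" by auto
  have r: "1 \<le> a" "a+b+c = s" "wt k a b c + 2 * fpos (Suc k) \<le> int d" using h by (auto simp: YY_def)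
  obtain k' a' b' c' where xx: "x = (k',a',b',c')" by (cases x) auto
  have "wtt x = wt k a b c + 2 * fpos (Suc k)" using wt_phi[OF r(1) h(2), where k=k and b=b and c=c] h(3) by simp
  then have w: "wt k' a' b' c' \<le> int d" using xx r(3) by simp
  have "case x of (k',a',b',c') \<Rightarrow> 1 \<le> a' \<and> c' \<le> 1 \<and> a'+b'+c' = a+b+c"
    using cnt_phi[OF r(1) h(2), where k=k and b=b and c=c] h(3) by simp
  then have "1 \<le> a' \<and> c' \<le> 1 \<and> a'+b'+c' = s" using xx r(2) by simp
  then show "x \<in> X01 d s" using w xx by (simp add: XX_def)
qed

lemma Z_sub: "1 \<le> s \<Longrightarrow> ZZ d s \<subseteq> X01 d s"
  by (auto simp: ZZ_def XX_def wt_def numeral_2_eq_2)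

lemma Z_disj: "phi ` Y12 d s \<inter> ZZ d s = {}"
proof -
  have "phi y \<notin> ZZ d s" if "y \<in> Y12 d s" for y
  proof -
    obtain k a b c where yy: "y = (k,a,b,c)" by (cases y) auto
    have "1 \<le> a" "a \<le> 2" using that yy by (auto simp: YY_def)
    then show ?thesis using yy by (auto simp: phi_def ZZ_def)
  qed
  then show ?thesis by auto
qed

lemma phi_inj: "inj_on phi (Y12 d s)"
proof (rule inj_onI)
  fix x y assume x: "x \<in> Y12 d s" and y: "y \<in> Y12 d s" and e: "phi x = phi y"
  obtain k a b c where xx: "x = (k,a,b,c)" by (cases x) auto
  obtain k' a' b' c' where yy: "y = (k',a',b',c')" by (cases y) auto
  have "1 \<le> a" "a \<le> 2" "1 \<le> a'" "a' \<le> 2" "a+b+c = s" "a'+b'+c' = s" using x y xx yy by (auto simp: YY_def)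
  then show "x = y" using e xx yy by (auto simp: phi_def split: if_splits)
qed

lemma pre:
  assumes "phi (k0,a0,b0,c0) = x" "1 \<le> a0" "a0 \<le> 2" "a0+b0+c0 = s" "x \<in> XX d s"
  shows "x \<in> phi ` Y12 d s"
proof -
  obtain k a b c where xx: "x = (k,a,b,c)" by (cases x) auto
  have "wtt x = wt k0 a0 b0 c0 + 2 * fpos (Suc k0)"
    using wt_phi[OF assms(2,3), where k=k0 and b=b0 and c=c0] assms(1) by simp
  moreover have "wtt x \<le> int d" using assms(5) xx by (simp add: XX_def)
  ultimately have "(k0,a0,b0,c0) \<in> Y12 d s" using assms by (simp add: YY_def)
  then show ?thesis using assms(1) by force
qed

lemma cover:
  assumes s1: "1 \<le> s"
  shows "X01 d s \<subseteq> phi ` Y12 d s \<union> ZZ d s"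
proof
  fix x assume x: "x \<in> X01 d s"
  obtain k a b c where xx: "x = (k,a,b,c)" by (cases x) auto
  have r: "1 \<le> a" "a+b+c = s" "wt k a b c \<le> int d" "c \<le> 1" using x xx by (auto simp: XX_def)
  have xX: "x \<in> XX d s" using x by simp
  show "x \<in> phi ` Y12 d s \<union> ZZ d s"
  proof (cases "c = 1")
    case c1: True
    show ?thesis
    proof (cases k)
      case 0
      have "wt k a b c = int s + 1" using 0 c1 r(2) by (simp add: wt_def numeral_2_eq_2)
      then have "x \<in> ZZ d s" using 0 c1 r xx by (auto simp: ZZ_def image_iff)
      then show ?thesis by simp
    next
      case (Suc k0)
      have "phi (k0, 1, a, b) = x" using Suc c1 r xx by (simp add: phi_def)
      then show ?thesis using pre[of k0 1 a b x s d] r c1 xX by simp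
    qed
  next
    case c0: False
    then have c: "c = 0" using r by simp
    show ?thesis
    proof (cases k)
      case 0
      have "wt k a b c = int s" using 0 c r(2) by (simp add: wt_def)
      then have "x \<in> ZZ d s" using 0 c r xx by (auto simp: ZZ_def image_iff)
      then show ?thesis by simp
    next
      case (Suc k1)
      show ?thesis
      proof (cases "2 \<le> b")
        case b2: True
        have "phi (k1, 2, a, b - 2) = x" using Suc c b2 r xx by (simp add: phi_def)
        then show ?thesis using pre[of k1 2 a "b-2" x s d] r c b2 xX by simp
      next
        case b2: False
        show ?thesis
        proof (cases k1)
          case 0
          have "x \<in> ZZ d s"
          proof (cases "b = 0")
            case True then show ?thesis using 0 Suc c r xx by (auto simp: ZZ_def wt_def)
          next
            case False
            then have "b = 1" using b2 by simp
            then show ?thesis using 0 Suc c r xx by (auto simp: ZZ_def wt_def numeral_2_eq_2)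
          qed
          then show ?thesis by simp
        next
          case (Suc k0)
          note kk = Suc
          show ?thesis
          proof (cases "b = 1")
            case True
            have "phi (k0, 1, 0, a) = x" using kk \<open>k = Suc k1\<close> c True r xx by (simp add: phi_def)
            then show ?thesis using pre[of k0 1 0 a x s d] r c True xX by simp
          next
            case False
            then have b0: "b = 0" using b2 by simp
            show ?thesis
            proof (cases "2 \<le> a")
              case True
              have "phi (k0, 2, 0, a - 2) = x" using kk \<open>k = Suc k1\<close> c b0 True r xx by (simp add: phi_def)
              then show ?thesis using pre[of k0 2 0 "a-2" x s d] r c b0 True xX by simp
            next
              case False
              then have a1: "a = 1" using r by simp
              show ?thesis
              proof (cases k0)
                case 0
                have "wt k a b c = 2" using 0 kk \<open>k = Suc k1\<close> a1 b0 c by (simp add: wt_def)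
                then have "x \<in> ZZ d s" using 0 kk \<open>k = Suc k1\<close> a1 b0 c r xx by (auto simp: ZZ_def)
                then show ?thesis by simp
              next
                case (Suc k2)
                have "phi (k2, 1, 0, 0) = x" using Suc kk \<open>k = Suc k1\<close> a1 b0 c xx by (simp add: phi_def)
                then show ?thesis using pre[of k2 1 0 0 x s d] r a1 b0 c xX by simp
              qed
            qed
          qed
        qed
      qed
    qed
  qed
qed



lemma card_ZZ:
  assumes s1: "1 \<le> s"
  shows "card (ZZ d s) = (if s < d then 2 * s + 1 else if s = d then d + 1 else 0)"
proof -
  define Z1 where "Z1 = (if s \<le> d then (\<lambda>a. (0::nat,a,s-a,0::nat)) ` {1..s} else {})"
  define Z2 where "Z2 = (if s \<le> d then {(1::nat,s,0::nat,0::nat)} else {})"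
  define Z3 where "Z3 = (if 2 \<le> s \<and> s+1 \<le> d then {(1::nat,s-1,1::nat,0::nat)} else {})"
  define Z4 where "Z4 = (if s+1 \<le> d then (\<lambda>a. (0::nat,a,s-1-a,1::nat)) ` {1..s-1} else {})"
  define Z5 where "Z5 = (if s = 1 \<and> 2 \<le> d then {(2::nat,1::nat,0::nat,0::nat)} else {})"
  have ZZ: "ZZ d s = Z1 \<union> Z2 \<union> Z3 \<union> Z4 \<union> Z5"
    unfolding ZZ_def Z1_def Z2_def Z3_def Z4_def Z5_def by simp
  have f: "finite Z1" "finite Z2" "finite Z3" "finite Z4" "finite Z5"
    by (auto simp: Z1_def Z2_def Z3_def Z4_def Z5_def)
  have c1: "card Z1 = (if s \<le> d then s else 0)"
    unfolding Z1_def by (simp add: card_image inj_on_def)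
  have c2: "card Z2 = (if s \<le> d then 1 else 0)" unfolding Z2_def by simp
  have c3: "card Z3 = (if 2 \<le> s \<and> s+1 \<le> d then 1 else 0)" unfolding Z3_def by simp
  have c4: "card Z4 = (if s+1 \<le> d then s - 1 else 0)"
    unfolding Z4_def by (simp add: card_image inj_on_def)
  have c5: "card Z5 = (if s = 1 \<and> 2 \<le> d then 1 else 0)" unfolding Z5_def by simp
  have d12: "Z1 \<inter> Z2 = {}" by (auto simp: Z1_def Z2_def)
  have d3: "(Z1 \<union> Z2) \<inter> Z3 = {}" by (auto simp: Z1_def Z2_def Z3_def)
  have d4: "(Z1 \<union> Z2 \<union> Z3) \<inter> Z4 = {}" by (auto simp: Z1_def Z2_def Z3_def Z4_def)
  have d5: "(Z1 \<union> Z2 \<union> Z3 \<union> Z4) \<inter> Z5 = {}" by (auto simp: Z1_def Z2_def Z3_def Z4_def Z5_def)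
  have "card (ZZ d s) = card Z1 + card Z2 + card Z3 + card Z4 + card Z5"
    unfolding ZZ using f d12 d3 d4 d5 by (simp add: card_Un_disjoint)
  then show ?thesis using c1 c2 c3 c4 c5 s1 by auto
qed

lemma card_R:
  assumes s1: "1 \<le> s"
  shows "card (R d s) = (if s < d then 2 * s + 1 else if s = d then d + 1 else 0)"
proof -
  have fX: "finite (XX d s)" by (rule XX_fin)
  have fY: "finite (YY d s)" by (rule YY_fin)
  have cX: "card (XX d s) = card (X01 d s) + card {x \<in> XX d s. case x of (k,a,b,c) \<Rightarrow> 2 \<le> c}"
  proof -
    have "XX d s = X01 d s \<union> {x \<in> XX d s. case x of (k,a,b,c) \<Rightarrow> 2 \<le> c}" by auto
    moreover have "X01 d s \<inter> {x \<in> XX d s. case x of (k,a,b,c) \<Rightarrow> 2 \<le> c} = {}" by auto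
    ultimately show ?thesis using fX by (metis (no_types, lifting) card_Un_disjoint finite_Un)
  qed
  have cY: "card (YY d s) = card (Y12 d s) + card {x \<in> YY d s. case x of (k,a,b,c) \<Rightarrow> 3 \<le> a}"
  proof -
    have "YY d s = Y12 d s \<union> {x \<in> YY d s. case x of (k,a,b,c) \<Rightarrow> 3 \<le> a}" by auto
    moreover have "Y12 d s \<inter> {x \<in> YY d s. case x of (k,a,b,c) \<Rightarrow> 3 \<le> a} = {}" by auto
    ultimately show ?thesis using fY by (metis (no_types, lifting) card_Un_disjoint finite_Un)
  qed
  have X01eq: "X01 d s = phi ` Y12 d s \<union> ZZ d s"
    using phi_img Z_sub[OF s1] cover[OF s1] by blast
  have fZ: "finite (ZZ d s)" using Z_sub[OF s1] fX finite_subset by fastforce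
  have fY12: "finite (Y12 d s)" using fY by simp
  have cX01: "card (X01 d s) = card (Y12 d s) + card (ZZ d s)"
  proof -
    have "card (X01 d s) = card (phi ` Y12 d s) + card (ZZ d s)"
      unfolding X01eq by (rule card_Un_disjoint[OF finite_imageI[OF fY12] fZ Z_disj])
    also have "card (phi ` Y12 d s) = card (Y12 d s)" using phi_inj by (rule card_image)
    finally show ?thesis .
  qed
  have "card (R d s) = card (ZZ d s)"
    using card_R1[of d s] cX cY cX01 card_shift[of d s] by simp
  then show ?thesis using card_ZZ[OF s1] by simp
qed


theorem mainTheorem1:
  fixes d s :: nat
  shows "finite (Eds d s) \<and>
         chi d s = (if s < d then 2 * s + 1 else if s = d then d + 1 else 0) \<and>
         (d < s \<longrightarrow> Eds d s = {})"
proof (cases "s = 0")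
  case True
  then show ?thesis using Eds_0[of d] by (auto simp: chi_def)
next
  case False
  then have s1: "1 \<le> s" by simp
  have e: "Eds d s = pt ` R d s" by (rule Eds_char[OF s1])
  have "chi d s = card (R d s)" unfolding chi_def e by (rule card_image[OF pt_inj])
  then show ?thesis using e R_fin card_R[OF s1] Eds_big by auto
qed

end
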